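(* Let $d\geq 2$ be even. Then there is a constant $C>0$, independent of $q$, $j$ and $g$, such that for every finite field $\mathbb F_q$ of odd characteristic, every $j\in\mathbb F_q\setminus\{0\}$, with $S_j=\{x\in\mathbb F_q^d: x_1^2+\cdots+x_d^2=j\}$, and every homogeneous function of degree zero $g:\mathbb F_q^d\to\mathbb C$, $$\Big(\frac{1}{|S_j|}\sum_{x\in S_j}|\widehat g(x)|^2\Big)^{1/2}\le C\Big(\sum_{m\in\mathbb F_q^d}|g(m)|^{\frac{2d+4}{d+4}}\Big)^{\frac{d+4}{2d+4}}.$$
   Context: $\mathbb F_q$ denotes a finite field with $q$ elements whose characteristic is greater than two, and $\chi$ is a fixed nontrivial additive character of $\mathbb F_q$. For $g:\mathbb F_q^d\to\mathbb C$, its Fourier transform is $\widehat g(x)=\sum_{m\in\mathbb F_q^d}\chi(-m\cdot x)g(m)$ for $x\in\mathbb F_q^d$. A function $g:\mathbb F_q^d\to\mathbb C$ is homogeneous of degree zero if $g(sm)=g(m)$ for all $m\in\mathbb F_q^d$ and all $s\in\mathbb F_q\setminus\{0\}$. *)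

theory Defs
  imports "HOL-Analysis.Analysis" "HOL-Algebra.Ring" "HOL-Library.FuncSet"
begin

text \<open>A finite field is modelled as an HOL-Algebra field record R whose carrier
  is a finite set of natural numbers (every finite field is isomorphic to one of these),
  so that the constant C can be quantified before all finite fields.\<close>

definition vecs :: "('a, 'b) ring_scheme \<Rightarrow> nat \<Rightarrow> (nat \<Rightarrow> 'a) set" where
  "vecs R d = PiE {..<d} (\<lambda>_. carrier R)"

definition dotp :: "('a, 'b) ring_scheme \<Rightarrow> nat \<Rightarrow> (nat \<Rightarrow> 'a) \<Rightarrow> (nat \<Rightarrow> 'a) \<Rightarrow> 'a" where
  "dotp R d m x = finsum R (\<lambda>i. m i \<otimes>\<^bsub>R\<^esub> x i) {..<d}"

definition char_gt_two :: "('a, 'b) ring_scheme \<Rightarrow> bool" where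
  "char_gt_two R \<longleftrightarrow> \<one>\<^bsub>R\<^esub> \<oplus>\<^bsub>R\<^esub> \<one>\<^bsub>R\<^esub> \<noteq> \<zero>\<^bsub>R\<^esub>"

definition nontrivial_add_char :: "('a, 'b) ring_scheme \<Rightarrow> ('a \<Rightarrow> complex) \<Rightarrow> bool" where
  "nontrivial_add_char R chi \<longleftrightarrow>
     (\<forall>a\<in>carrier R. chi a \<noteq> 0) \<and>
     (\<forall>a\<in>carrier R. \<forall>b\<in>carrier R. chi (a \<oplus>\<^bsub>R\<^esub> b) = chi a * chi b) \<and>
     (\<exists>a\<in>carrier R. chi a \<noteq> 1)"

definition fourier :: "('a, 'b) ring_scheme \<Rightarrow> ('a \<Rightarrow> complex) \<Rightarrow> nat \<Rightarrow>
    ((nat \<Rightarrow> 'a) \<Rightarrow> complex) \<Rightarrow> (nat \<Rightarrow> 'a) \<Rightarrow> complex" where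
  "fourier R chi d g x = (\<Sum>m\<in>vecs R d. chi (\<ominus>\<^bsub>R\<^esub> dotp R d m x) * g m)"

definition sphere_set :: "('a, 'b) ring_scheme \<Rightarrow> nat \<Rightarrow> 'a \<Rightarrow> (nat \<Rightarrow> 'a) set" where
  "sphere_set R d j = {x \<in> vecs R d. dotp R d x x = j}"

definition homogeneous_deg0 :: "('a, 'b) ring_scheme \<Rightarrow> nat \<Rightarrow> ((nat \<Rightarrow> 'a) \<Rightarrow> complex) \<Rightarrow> bool" where
  "homogeneous_deg0 R d g \<longleftrightarrow>
     (\<forall>m\<in>vecs R d. \<forall>s\<in>carrier R - {\<zero>\<^bsub>R\<^esub>}.
        g (\<lambda>i\<in>{..<d}. s \<otimes>\<^bsub>R\<^esub> m i) = g m)"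

end

theory Submission
  imports Defs
begin

locale fsetting = field R for R :: "('a,'b) ring_scheme" (structure) +
  fixes chi :: "'a \<Rightarrow> complex"
  assumes fin: "finite (carrier R)" and chi: "nontrivial_add_char R chi"
begin

lemma chi_nz: "a \<in> carrier R \<Longrightarrow> chi a \<noteq> 0"
  using chi unfolding nontrivial_add_char_def by blast
lemma chi_add: "a \<in> carrier R \<Longrightarrow> b \<in> carrier R \<Longrightarrow> chi (a \<oplus> b) = chi a * chi b"
  using chi unfolding nontrivial_add_char_def by blast
lemma chi_nontriv: "\<exists>b\<in>carrier R. chi b \<noteq> 1"
  using chi unfolding nontrivial_add_char_def by blast

lemma chi_zero: "chi \<zero> = 1"
proof -
  have "chi \<zero> = chi \<zero> * chi \<zero>" using chi_add[of \<zero> \<zero>] by simp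
  thus ?thesis using chi_nz[of \<zero>] by simp
qed

lemma chi_le1: assumes "a \<in> carrier R" shows "cmod (chi a) \<le> 1"
proof -
  define M where "M = Max ((\<lambda>x. cmod (chi x)) ` carrier R)"
  have fM: "finite ((\<lambda>x. cmod (chi x)) ` carrier R)" using fin by simp
  have le: "cmod (chi x) \<le> M" if "x \<in> carrier R" for x
    unfolding M_def using fM that by (intro Max_ge) auto
  have "M \<in> (\<lambda>x. cmod (chi x)) ` carrier R" unfolding M_def using fM assms by (intro Max_in) auto
  then obtain x0 where x0: "x0 \<in> carrier R" "M = cmod (chi x0)" by auto
  have "M * M = cmod (chi (x0 \<oplus> x0))" using chi_add[OF x0(1) x0(1)] x0(2) by (simp add: norm_mult)
  also have "\<dots> \<le> M" using le x0 by simp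
  finally have "M * M \<le> M" .
  moreover have "M > 0" using x0 chi_nz by simp
  ultimately have "M \<le> 1" by (metis mult.right_neutral mult_left_le_imp_le)
  thus ?thesis using le[OF assms] by simp
qed

lemma chi_norm: assumes "a \<in> carrier R" shows "cmod (chi a) = 1"
proof -
  have "chi a * chi (\<ominus> a) = 1" using chi_add[of a "\<ominus> a"] assms chi_zero by (simp add: r_neg)
  hence "cmod (chi a) * cmod (chi (\<ominus> a)) = 1" by (metis norm_mult norm_one)
  moreover have "cmod (chi a) \<le> 1" "cmod (chi (\<ominus> a)) \<le> 1" using chi_le1 assms by auto
  ultimately show ?thesis
    by (metis mult_le_one norm_ge_zero nle_le mult_left_le)
qed

lemma chi_neg: assumes "a \<in> carrier R" shows "chi (\<ominus> a) = cnj (chi a)"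
proof -
  have 1: "chi a * chi (\<ominus> a) = 1" using chi_add[of a "\<ominus> a"] assms chi_zero by (simp add: r_neg)
  have 2: "chi a * cnj (chi a) = 1" using chi_norm[OF assms]
    by (metis complex_norm_square mult.commute of_real_1 power_one)
  show ?thesis using 1 2 chi_nz[OF assms] by (metis mult_left_cancel)
qed

lemma vecs_fin: "finite (vecs R d)"
  unfolding vecs_def by (simp add: finite_PiE fin)
lemma card_vecs: "card (vecs R d) = card (carrier R) ^ d"
  unfolding vecs_def by (simp add: card_PiE)
lemma vecs_mem: "x \<in> vecs R d \<Longrightarrow> i < d \<Longrightarrow> x i \<in> carrier R"
  unfolding vecs_def by auto
lemma vecs_out: "x \<in> vecs R d \<Longrightarrow> \<not> i < d \<Longrightarrow> x i = undefined"
  unfolding vecs_def by auto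
lemma vecs_eqI: "x \<in> vecs R d \<Longrightarrow> y \<in> vecs R d \<Longrightarrow> (\<And>i. i < d \<Longrightarrow> x i = y i) \<Longrightarrow> x = y"
  using vecs_out by (metis ext)
lemma vecs_upd: "x \<in> vecs R d \<Longrightarrow> i < d \<Longrightarrow> a \<in> carrier R \<Longrightarrow> x(i := a) \<in> vecs R d"
  unfolding vecs_def by (auto simp: PiE_iff extensional_def)
lemma vecs_restrict: "(\<And>i. i < d \<Longrightarrow> f i \<in> carrier R) \<Longrightarrow> (\<lambda>i\<in>{..<d}. f i) \<in> vecs R d"
  unfolding vecs_def by auto

lemma dotp_closed: "x \<in> vecs R d \<Longrightarrow> y \<in> vecs R d \<Longrightarrow> dotp R d x y \<in> carrier R"
  unfolding dotp_def by (intro finsum_closed) (auto simp: vecs_mem)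

definition drest :: "nat \<Rightarrow> nat \<Rightarrow> (nat \<Rightarrow> 'a) \<Rightarrow> (nat \<Rightarrow> 'a) \<Rightarrow> 'a" where
  "drest d i x y = finsum R (\<lambda>k. x k \<otimes> y k) ({..<d} - {i})"

lemma drest_closed: "x \<in> vecs R d \<Longrightarrow> y \<in> vecs R d \<Longrightarrow> drest d i x y \<in> carrier R"
  unfolding drest_def by (intro finsum_closed) (auto simp: vecs_mem)

lemma dotp_upd:
  assumes x: "x \<in> vecs R d" and y: "y \<in> vecs R d" and i: "i < d" and a: "a \<in> carrier R" and b: "b \<in> carrier R"
  shows "dotp R d (x(i := a)) (y(i := b)) = a \<otimes> b \<oplus> drest d i x y"
proof -
  have U: "{..<d} = insert i ({..<d} - {i})" using i by auto
  have "dotp R d (x(i := a)) (y(i := b)) = finsum R (\<lambda>k. (x(i := a)) k \<otimes> (y(i := b)) k) (insert i ({..<d} - {i}))"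
    unfolding dotp_def using U by simp
  also have "\<dots> = a \<otimes> b \<oplus> finsum R (\<lambda>k. (x(i := a)) k \<otimes> (y(i := b)) k) ({..<d} - {i})"
    using x y a b by (subst finsum_insert) (auto simp: vecs_mem)
  also have "finsum R (\<lambda>k. (x(i := a)) k \<otimes> (y(i := b)) k) ({..<d} - {i}) = drest d i x y"
    unfolding drest_def using x y by (intro finsum_cong) (auto simp: vecs_mem)
  finally show ?thesis .
qed

lemma dotp_split:
  assumes x: "x \<in> vecs R d" and y: "y \<in> vecs R d" and i: "i < d"
  shows "dotp R d x y = x i \<otimes> y i \<oplus> drest d i x y"
  using dotp_upd[OF x y i, of "x i" "y i"] x y i by (simp add: vecs_mem)

lemma dotp_shift:
  assumes w: "w \<in> vecs R d" and y: "y \<in> vecs R d" and i: "i < d" and t: "t \<in> carrier R"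
  shows "dotp R d w (y(i := y i \<oplus> t)) = dotp R d w y \<oplus> w i \<otimes> t"
proof -
  have wi: "w i \<in> carrier R" and yi: "y i \<in> carrier R" using w y i by (auto simp: vecs_mem)
  have "dotp R d w (y(i := y i \<oplus> t)) = dotp R d (w(i := w i)) (y(i := y i \<oplus> t))" by simp
  also have "\<dots> = w i \<otimes> (y i \<oplus> t) \<oplus> drest d i w y" using wi yi t by (intro dotp_upd[OF w y i]) auto
  also have "\<dots> = (w i \<otimes> y i \<oplus> drest d i w y) \<oplus> w i \<otimes> t"
    using wi yi t drest_closed[OF w y] by algebra
  also have "\<dots> = dotp R d w y \<oplus> w i \<otimes> t" using dotp_split[OF w y i] by simp
  finally show ?thesis .
qed

lemma dotp_comm: "dotp R d x y = dotp R d y x" if "x \<in> vecs R d" "y \<in> vecs R d"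
  unfolding dotp_def using that by (intro finsum_cong) (auto simp: vecs_mem m_comm)

definition smul :: "nat \<Rightarrow> 'a \<Rightarrow> (nat \<Rightarrow> 'a) \<Rightarrow> (nat \<Rightarrow> 'a)" where
  "smul d s x = (\<lambda>i\<in>{..<d}. s \<otimes> x i)"

lemma smul_vecs: "s \<in> carrier R \<Longrightarrow> x \<in> vecs R d \<Longrightarrow> smul d s x \<in> vecs R d"
  unfolding smul_def by (intro vecs_restrict) (auto simp: vecs_mem)

lemma dotp_smul_left: assumes "s \<in> carrier R" "x \<in> vecs R d" "y \<in> vecs R d"
  shows "dotp R d (smul d s x) y = s \<otimes> dotp R d x y"
proof -
  have "s \<otimes> dotp R d x y = finsum R (\<lambda>k. s \<otimes> (x k \<otimes> y k)) {..<d}"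
    unfolding dotp_def using assms by (intro finsum_rdistr) (auto simp: vecs_mem)
  also have "\<dots> = dotp R d (smul d s x) y"
    unfolding dotp_def smul_def using assms by (intro finsum_cong) (auto simp: vecs_mem m_assoc)
  finally show ?thesis by simp
qed

lemma dotp_smul_right: assumes "s \<in> carrier R" "x \<in> vecs R d" "y \<in> vecs R d"
  shows "dotp R d x (smul d s y) = s \<otimes> dotp R d x y"
  using dotp_smul_left[OF assms(1,3,2)] dotp_comm assms smul_vecs by metis

lemma smul_smul: "s \<in> carrier R \<Longrightarrow> t \<in> carrier R \<Longrightarrow> x \<in> vecs R d \<Longrightarrow> smul d s (smul d t x) = smul d (s \<otimes> t) x"
  unfolding smul_def by (auto simp: vecs_mem m_assoc)
lemma smul_one: "x \<in> vecs R d \<Longrightarrow> smul d \<one> x = x"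
  unfolding smul_def by (rule vecs_eqI[of _ d]) (auto simp: vecs_mem intro: vecs_restrict)

lemma minus_eq0: "a \<in> carrier R \<Longrightarrow> b \<in> carrier R \<Longrightarrow> a \<ominus> b = \<zero> \<longleftrightarrow> a = b"
  by (metis a_minus_def add.inv_closed minus_equality r_neg)

lemma inv_facts: "s \<in> carrier R \<Longrightarrow> s \<noteq> \<zero> \<Longrightarrow> inv s \<in> carrier R \<and> inv s \<otimes> s = \<one> \<and> s \<otimes> inv s = \<one> \<and> inv s \<noteq> \<zero>"
  using field_Units by (metis Diff_iff Units_inv_Units Units_inv_closed Units_l_inv Units_r_inv empty_iff insert_iff)

lemma orth:
  assumes w: "w \<in> vecs R d" and i: "i < d" and wi0: "w i \<noteq> \<zero>"
  shows "(\<Sum>y\<in>vecs R d. chi (dotp R d w y)) = 0"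
proof -
  obtain b where b: "b \<in> carrier R" "chi b \<noteq> 1" using chi_nontriv by blast
  have wi: "w i \<in> carrier R" using w i by (simp add: vecs_mem)
  define t where "t = inv (w i) \<otimes> b"
  have t: "t \<in> carrier R" unfolding t_def using inv_facts[OF wi wi0] b by simp
  have wt: "w i \<otimes> t = b" unfolding t_def using inv_facts[OF wi wi0] b wi
    by (metis m_assoc l_one Units_inv_closed)
  define \<sigma> where "\<sigma> y = y(i := y i \<oplus> t)" for y
  define \<tau> where "\<tau> y = y(i := y i \<ominus> t)" for y
  have bij: "bij_betw \<sigma> (vecs R d) (vecs R d)"
  proof (rule bij_betw_byWitness[where f'=\<tau>])
    show "\<forall>a\<in>vecs R d. \<tau> (\<sigma> a) = a"
    proof
      fix y assume y: "y \<in> vecs R d"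
      have "y i \<oplus> t \<ominus> t = y i" using y i t vecs_mem[OF y i] by algebra
      thus "\<tau> (\<sigma> y) = y" unfolding \<sigma>_def \<tau>_def by simp
    qed
    show "\<forall>a\<in>vecs R d. \<sigma> (\<tau> a) = a"
    proof
      fix y assume y: "y \<in> vecs R d"
      have "y i \<ominus> t \<oplus> t = y i" using y i t vecs_mem[OF y i] by algebra
      thus "\<sigma> (\<tau> y) = y" unfolding \<sigma>_def \<tau>_def by simp
    qed
    show "\<sigma> ` vecs R d \<subseteq> vecs R d" unfolding \<sigma>_def using i t by (auto intro!: vecs_upd simp: vecs_mem)
    show "\<tau> ` vecs R d \<subseteq> vecs R d" unfolding \<tau>_def using i t by (auto intro!: vecs_upd simp: vecs_mem)
  qed
  have "(\<Sum>y\<in>vecs R d. chi (dotp R d w y)) = (\<Sum>y\<in>vecs R d. chi (dotp R d w (\<sigma> y)))"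
    using sum.reindex_bij_betw[OF bij, of "\<lambda>y. chi (dotp R d w y)"] by simp
  also have "\<dots> = (\<Sum>y\<in>vecs R d. chi b * chi (dotp R d w y))"
    unfolding \<sigma>_def using dotp_shift[OF w _ i t] wt chi_add dotp_closed[OF w] b
    by (intro sum.cong) (auto simp: mult.commute)
  also have "\<dots> = chi b * (\<Sum>y\<in>vecs R d. chi (dotp R d w y))" by (simp add: sum_distrib_left)
  finally show ?thesis using b(2)
    by (metis mult_cancel_right1 mult.commute)
qed

definition dv :: "nat \<Rightarrow> (nat \<Rightarrow> 'a) \<Rightarrow> (nat \<Rightarrow> 'a) \<Rightarrow> (nat \<Rightarrow> 'a)" where
  "dv d x y = (\<lambda>k\<in>{..<d}. x k \<ominus> y k)"

lemma dv_vecs: "x \<in> vecs R d \<Longrightarrow> y \<in> vecs R d \<Longrightarrow> dv d x y \<in> vecs R d"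
  unfolding dv_def by (intro vecs_restrict) (auto simp: vecs_mem)

lemma dotp_dv: assumes x: "x \<in> vecs R d" and y: "y \<in> vecs R d" and z: "z \<in> vecs R d"
  shows "dotp R d (dv d x y) z = \<ominus> dotp R d y z \<oplus> dotp R d x z"
proof -
  have "dotp R d (dv d x y) z \<oplus> dotp R d y z = finsum R (\<lambda>k. dv d x y k \<otimes> z k \<oplus> y k \<otimes> z k) {..<d}"
    unfolding dotp_def using x y z dv_vecs[OF x y] by (intro finsum_addf[symmetric]) (auto simp: vecs_mem)
  also have "\<dots> = dotp R d x z"
  proof -
    have pt: "(x k \<ominus> y k) \<otimes> z k \<oplus> y k \<otimes> z k = x k \<otimes> z k" if "k < d" for k
    proof -
      have c: "x k \<in> carrier R" "y k \<in> carrier R" "z k \<in> carrier R" using x y z that by (auto simp: vecs_mem)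
      thus ?thesis by algebra
    qed
    show ?thesis unfolding dotp_def dv_def using x y z pt by (intro finsum_cong) (auto simp: vecs_mem)
  qed
  finally have e: "dotp R d (dv d x y) z \<oplus> dotp R d y z = dotp R d x z" .
  have c: "dotp R d (dv d x y) z \<in> carrier R" "dotp R d y z \<in> carrier R"
    using dotp_closed x y z dv_vecs by auto
  have "dotp R d (dv d x y) z = \<ominus> dotp R d y z \<oplus> (dotp R d (dv d x y) z \<oplus> dotp R d y z)"
    using c by algebra
  thus ?thesis using e by simp
qed

lemma orth_sum: assumes m: "m \<in> vecs R d" and m': "m' \<in> vecs R d"
  shows "(\<Sum>y\<in>vecs R d. chi (dotp R d (dv d m' m) y)) = (if m' = m then of_nat (card (vecs R d)) else 0)"
proof (cases "m' = m")
  case True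
  have "dotp R d (dv d m' m) y = \<zero>" if y: "y \<in> vecs R d" for y
  proof -
    have "dotp R d (dv d m' m) y = finsum R (\<lambda>k. \<zero>) {..<d}"
      unfolding dotp_def dv_def using True m y by (intro finsum_cong) (auto simp: vecs_mem r_neg[folded a_minus_def] a_minus_def r_neg)
    thus ?thesis by simp
  qed
  thus ?thesis using True chi_zero by simp
next
  case False
  then obtain i where i: "i < d" "m' i \<noteq> m i" using vecs_eqI[OF m' m] by blast
  have "dv d m' m i \<noteq> \<zero>" unfolding dv_def using i minus_eq0 m m' vecs_mem by auto
  thus ?thesis using orth[OF dv_vecs[OF m' m] i(1)] False by simp
qed

lemma planch:
  "(\<Sum>y\<in>vecs R d. (cmod (fourier R chi d g y))\<^sup>2) = real (card (vecs R d)) * (\<Sum>m\<in>vecs R d. (cmod (g m))\<^sup>2)"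
proof -
  let ?V = "vecs R d"
  let ?F = "fourier R chi d g"
  have key: "complex_of_real ((cmod (?F y))\<^sup>2) =
     (\<Sum>m\<in>?V. \<Sum>m'\<in>?V. chi (dotp R d (dv d m' m) y) * (g m * cnj (g m')))" if y: "y \<in> ?V" for y
  proof -
    have "complex_of_real ((cmod (?F y))\<^sup>2) = ?F y * cnj (?F y)" by (rule complex_norm_square)
    also have "\<dots> = (\<Sum>m\<in>?V. chi (\<ominus> dotp R d m y) * g m) * (\<Sum>m'\<in>?V. cnj (chi (\<ominus> dotp R d m' y) * g m'))"
      unfolding fourier_def by simp
    also have "\<dots> = (\<Sum>m\<in>?V. \<Sum>m'\<in>?V. (chi (\<ominus> dotp R d m y) * g m) * cnj (chi (\<ominus> dotp R d m' y) * g m'))"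
      by (rule sum_product)
    also have "\<dots> = (\<Sum>m\<in>?V. \<Sum>m'\<in>?V. chi (dotp R d (dv d m' m) y) * (g m * cnj (g m')))"
    proof (intro sum.cong refl)
      fix m m' assume m: "m \<in> ?V" and m': "m' \<in> ?V"
      have c: "dotp R d m y \<in> carrier R" "dotp R d m' y \<in> carrier R" using dotp_closed m m' y by auto
      have "cnj (chi (\<ominus> dotp R d m' y)) = chi (dotp R d m' y)" using chi_neg[OF c(2)] by simp
      moreover have "chi (\<ominus> dotp R d m y) * chi (dotp R d m' y) = chi (dotp R d (dv d m' m) y)"
        using chi_add[of "\<ominus> dotp R d m y" "dotp R d m' y"] c dotp_dv[OF m' m y] by simp
      ultimately show "(chi (\<ominus> dotp R d m y) * g m) * cnj (chi (\<ominus> dotp R d m' y) * g m') =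
          chi (dotp R d (dv d m' m) y) * (g m * cnj (g m'))"
        by (metis (no_types, lifting) complex_cnj_mult mult.assoc mult.left_commute)
    qed
    finally show ?thesis .
  qed
  have "complex_of_real (\<Sum>y\<in>?V. (cmod (?F y))\<^sup>2) =
      (\<Sum>y\<in>?V. \<Sum>m\<in>?V. \<Sum>m'\<in>?V. chi (dotp R d (dv d m' m) y) * (g m * cnj (g m')))"
    using key by simp
  also have "\<dots> = (\<Sum>m\<in>?V. \<Sum>y\<in>?V. \<Sum>m'\<in>?V. chi (dotp R d (dv d m' m) y) * (g m * cnj (g m')))"
    by (rule sum.swap)
  also have "\<dots> = (\<Sum>m\<in>?V. \<Sum>m'\<in>?V. \<Sum>y\<in>?V. chi (dotp R d (dv d m' m) y) * (g m * cnj (g m')))"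
    by (rule sum.cong[OF refl], rule sum.swap)
  also have "\<dots> = (\<Sum>m\<in>?V. \<Sum>m'\<in>?V. (g m * cnj (g m')) * (if m' = m then of_nat (card ?V) else 0))"
  proof (intro sum.cong refl)
    fix m m' assume m: "m \<in> ?V" and m': "m' \<in> ?V"
    have "(\<Sum>y\<in>?V. chi (dotp R d (dv d m' m) y) * (g m * cnj (g m'))) =
        (\<Sum>y\<in>?V. chi (dotp R d (dv d m' m) y)) * (g m * cnj (g m'))"
      by (simp add: sum_distrib_right)
    also have "\<dots> = (g m * cnj (g m')) * (if m' = m then of_nat (card ?V) else 0)"
      using orth_sum[OF m m'] by simp
    finally show "(\<Sum>y\<in>?V. chi (dotp R d (dv d m' m) y) * (g m * cnj (g m'))) =
        (g m * cnj (g m')) * (if m' = m then of_nat (card ?V) else 0)" .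
  qed
  also have "\<dots> = (\<Sum>m\<in>?V. (g m * cnj (g m)) * of_nat (card ?V))"
    by (intro sum.cong refl) (simp add: vecs_fin if_distrib cong: if_cong)
  also have "\<dots> = complex_of_real (real (card ?V) * (\<Sum>m\<in>?V. (cmod (g m))\<^sup>2))"
    by (simp add: complex_norm_square[symmetric] sum_distrib_left mult.commute)
  finally show ?thesis by (simp only: of_real_eq_iff)
qed

lemma fourier_hom:
  assumes hg: "homogeneous_deg0 R d g" and s: "s \<in> carrier R" "s \<noteq> \<zero>" and x: "x \<in> vecs R d"
  shows "fourier R chi d g (smul d s x) = fourier R chi d g x"
proof -
  let ?V = "vecs R d"
  have iv: "inv s \<in> carrier R" "inv s \<otimes> s = \<one>" "s \<otimes> inv s = \<one>" using inv_facts[OF s] by auto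
  have bij: "bij_betw (smul d s) ?V ?V"
  proof (rule bij_betw_byWitness[where f'="smul d (inv s)"])
    show "\<forall>a\<in>?V. smul d (inv s) (smul d s a) = a" using iv s by (simp add: smul_smul smul_one)
    show "\<forall>a\<in>?V. smul d s (smul d (inv s) a) = a" using iv s by (simp add: smul_smul smul_one)
    show "smul d s ` ?V \<subseteq> ?V" using s smul_vecs by auto
    show "smul d (inv s) ` ?V \<subseteq> ?V" using iv smul_vecs by auto
  qed
  have gh: "g (smul d s m) = g m" if "m \<in> ?V" for m
    using hg s that unfolding homogeneous_deg0_def smul_def by auto
  have "fourier R chi d g (smul d s x) = (\<Sum>m\<in>?V. chi (\<ominus> dotp R d (smul d s m) x) * g (smul d s m))"
    unfolding fourier_def using dotp_smul_left dotp_smul_right s x gh by (intro sum.cong refl) auto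
  also have "\<dots> = fourier R chi d g x"
    unfolding fourier_def by (rule sum.reindex_bij_betw[OF bij, of "\<lambda>m. chi (\<ominus> dotp R d m x) * g m"])
  finally show ?thesis .
qed

lemma sq_eq: assumes a: "a \<in> carrier R" and b: "b \<in> carrier R" and e: "a \<otimes> a = b \<otimes> b"
  shows "a = b \<or> a = \<ominus> b"
proof -
  have "(a \<ominus> b) \<otimes> (a \<oplus> b) = a \<otimes> a \<ominus> b \<otimes> b" using a b by algebra
  also have "\<dots> = \<zero>" using e a b by (simp add: minus_eq0)
  finally have "a \<ominus> b = \<zero> \<or> a \<oplus> b = \<zero>" using a b integral by blast
  moreover have "a \<oplus> b = \<zero> \<Longrightarrow> a = \<ominus> b" using a b by (metis minus_equality)
  ultimately show ?thesis using a b minus_eq0 by blast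
qed

lemma card_fiber2: assumes "finite A" and "\<And>y. card {x\<in>A. f x = y} \<le> 2"
  shows "card A \<le> 2 * card (f ` A)"
proof -
  have "A = (\<Union>y\<in>f ` A. {x\<in>A. f x = y})" by auto
  hence "card A \<le> (\<Sum>y\<in>f ` A. card {x\<in>A. f x = y})"
    using card_UN_le[of "f ` A" "\<lambda>y. {x\<in>A. f x = y}"] assms(1) by simp
  also have "\<dots> \<le> (\<Sum>y\<in>f ` A. 2)" by (intro sum_mono assms(2))
  finally show ?thesis by simp
qed

lemma double_count:
  assumes j: "j \<in> carrier R" "j \<noteq> \<zero>" and hg: "homogeneous_deg0 R d g"
  shows "real (card (carrier R) - 1) * (\<Sum>x\<in>sphere_set R d j. (cmod (fourier R chi d g x))\<^sup>2)
     \<le> 2 * (\<Sum>y\<in>vecs R d. (cmod (fourier R chi d g y))\<^sup>2)"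
proof -
  let ?V = "vecs R d" and ?S = "sphere_set R d j" and ?K = "carrier R - {\<zero>}"
  define h where "h y = (cmod (fourier R chi d g y))\<^sup>2" for y
  define \<phi> where "\<phi> p = smul d (snd p) (fst p)" for p
  let ?P = "?S \<times> ?K"
  have SV: "?S \<subseteq> ?V" unfolding sphere_set_def by auto
  have finS: "finite ?S" using vecs_fin SV finite_subset by blast
  have finK: "finite ?K" using fin by simp
  have finP: "finite ?P" using finS finK by simp
  have cK: "card ?K = card (carrier R) - 1" using fin by (simp add: card_Diff_singleton)
  have hphi: "h (\<phi> p) = h (fst p)" if "p \<in> ?P" for p
  proof -
    have "fst p \<in> ?V" "snd p \<in> carrier R" "snd p \<noteq> \<zero>" using that SV by (auto simp: mem_Times_iff)
    thus ?thesis unfolding h_def \<phi>_def using fourier_hom[OF hg] by simp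
  qed
  have "real (card (carrier R) - 1) * (\<Sum>x\<in>?S. h x) = (\<Sum>x\<in>?S. \<Sum>s\<in>?K. h x)"
    using cK by (simp add: sum_distrib_right mult.commute)
  also have "\<dots> = (\<Sum>p\<in>?P. h (fst p))" by (subst sum.cartesian_product) (simp add: case_prod_beta)
  also have "\<dots> = (\<Sum>p\<in>?P. h (\<phi> p))" using hphi by simp
  also have "\<dots> = (\<Sum>y\<in>?V. \<Sum>p\<in>{p. p \<in> ?P \<and> \<phi> p = y}. h (\<phi> p))"
  proof (rule sum.group[symmetric, OF finP vecs_fin])
    show "\<phi> ` ?P \<subseteq> ?V" unfolding \<phi>_def using SV smul_vecs by auto
  qed
  also have "\<dots> = (\<Sum>y\<in>?V. h y * real (card {p. p \<in> ?P \<and> \<phi> p = y}))"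
    by (intro sum.cong refl) (simp add: mult.commute)
  also have "\<dots> \<le> (\<Sum>y\<in>?V. h y * 2)"
  proof (intro sum_mono mult_left_mono)
    fix y assume y: "y \<in> ?V"
    show "0 \<le> h y" unfolding h_def by simp
    show "real (card {p. p \<in> ?P \<and> \<phi> p = y}) \<le> 2"
    proof (cases "{p. p \<in> ?P \<and> \<phi> p = y} = {}")
      case True show ?thesis by (subst True) simp
    next
      case False
      then obtain x0 s0 where p0: "x0 \<in> ?S" "s0 \<in> ?K" "smul d s0 x0 = y" unfolding \<phi>_def by auto
      have x0: "x0 \<in> ?V" "dotp R d x0 x0 = j" using p0 unfolding sphere_set_def by auto
      have s0: "s0 \<in> carrier R" "s0 \<noteq> \<zero>" using p0 by auto
      have sub: "{p. p \<in> ?P \<and> \<phi> p = y} \<subseteq> {(x0, s0), (smul d (\<ominus> \<one>) x0, \<ominus> s0)}"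
      proof
        fix p assume pin: "p \<in> {p. p \<in> ?P \<and> \<phi> p = y}"
        obtain x s where pxs: "p = (x, s)" by (cases p)
        have p: "p = (x, s)" "x \<in> ?S" "s \<in> ?K" "smul d s x = smul d s0 x0"
          using pin pxs p0(3) unfolding \<phi>_def by auto
        have x: "x \<in> ?V" "dotp R d x x = j" using p unfolding sphere_set_def by auto
        have s: "s \<in> carrier R" "s \<noteq> \<zero>" using p by auto
        have iv: "inv s \<in> carrier R" "inv s \<otimes> s = \<one>" "s \<otimes> inv s = \<one>" using inv_facts[OF s] by auto
        define u where "u = inv s \<otimes> s0"
        have u: "u \<in> carrier R" unfolding u_def using iv s0 by simp
        have xu: "x = smul d u x0"
        proof -
          have "x = smul d (inv s) (smul d s x)" using iv x s by (simp add: smul_smul smul_one)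
          also have "\<dots> = smul d u x0" using p(4) iv s0 x0 by (simp add: smul_smul u_def)
          finally show ?thesis .
        qed
        have "j = u \<otimes> (u \<otimes> j)" using x(2) xu dotp_smul_left dotp_smul_right u x0 smul_vecs by simp
        hence "\<one> \<otimes> j = (u \<otimes> u) \<otimes> j" using u j by (simp add: m_assoc)
        hence "\<one> = u \<otimes> u" using m_rcancel[OF j(2) j(1)] u by simp
        hence "u \<otimes> u = \<one> \<otimes> \<one>" by (metis l_one one_closed)
        hence disj: "u = \<one> \<or> u = \<ominus> \<one>" using sq_eq[OF u one_closed] by blast
        have su: "s \<otimes> u = s0" unfolding u_def using iv s s0 by (simp add: m_assoc[symmetric])
        from disj show "p \<in> {(x0, s0), (smul d (\<ominus> \<one>) x0, \<ominus> s0)}"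
        proof
          assume "u = \<one>" thus ?thesis using su xu s x0 p(1) smul_one by simp
        next
          assume "u = \<ominus> \<one>"
          hence "s0 = \<ominus> s" using su s by (simp add: r_minus)
          hence "s = \<ominus> s0" using s by simp
          thus ?thesis using xu p(1) \<open>u = \<ominus> \<one>\<close> by simp
        qed
      qed
      have "card {p. p \<in> ?P \<and> \<phi> p = y} \<le> card {(x0, s0), (smul d (\<ominus> \<one>) x0, \<ominus> s0)}"
        by (rule card_mono[OF _ sub]) simp
      also have "\<dots> \<le> 2" by (simp add: card_insert_le_m1)
      finally show ?thesis by simp
    qed
  qed
  also have "\<dots> = 2 * (\<Sum>y\<in>?V. h y)" by (simp add: sum_distrib_left mult.commute)
  finally show ?thesis unfolding h_def .
qed

end

context fsetting begin

lemma two_squares: assumes t: "t \<in> carrier R"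
  shows "\<exists>a\<in>carrier R. \<exists>b\<in>carrier R. t = a \<otimes> a \<oplus> b \<otimes> b"
proof -
  let ?sq = "\<lambda>a. a \<otimes> a" and ?K = "carrier R - {\<zero>}"
  define Q where "Q = ?sq ` carrier R"
  have finQ: "finite Q" unfolding Q_def using fin by simp
  have QC: "Q \<subseteq> carrier R" unfolding Q_def by auto
  have "card ?K \<le> 2 * card (?sq ` ?K)"
  proof (rule card_fiber2)
    show "finite ?K" using fin by simp
    fix y show "card {x \<in> ?K. x \<otimes> x = y} \<le> 2"
    proof (cases "{x \<in> ?K. x \<otimes> x = y} = {}")
      case True show ?thesis by (subst True) simp
    next
      case False
      then obtain a0 where a0: "a0 \<in> ?K" "a0 \<otimes> a0 = y" by auto
      have "{x \<in> ?K. x \<otimes> x = y} \<subseteq> {a0, \<ominus> a0}"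
      proof
        fix x assume "x \<in> {x \<in> ?K. x \<otimes> x = y}"
        hence "x \<in> carrier R" "x \<otimes> x = a0 \<otimes> a0" using a0 by auto
        thus "x \<in> {a0, \<ominus> a0}" using sq_eq[of x a0] a0 by blast
      qed
      hence "card {x \<in> ?K. x \<otimes> x = y} \<le> card {a0, \<ominus> a0}" by (intro card_mono) auto
      also have "\<dots> \<le> 2" by (simp add: card_insert_le_m1)
      finally show ?thesis .
    qed
  qed
  moreover have "?sq ` ?K \<subseteq> Q - {\<zero>}"
  proof (rule image_subsetI)
    fix x assume x: "x \<in> ?K"
    have "x \<otimes> x \<noteq> \<zero>" using integral[of x x] x by blast
    thus "x \<otimes> x \<in> Q - {\<zero>}" unfolding Q_def using x by blast
  qed
  hence "card (?sq ` ?K) \<le> card (Q - {\<zero>})" using finQ by (intro card_mono) auto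
  moreover have "\<zero> \<in> Q" unfolding Q_def by force
  hence "card (Q - {\<zero>}) = card Q - 1" using finQ by (simp add: card_Diff_singleton)
  moreover have "card ?K = card (carrier R) - 1" using fin by (simp add: card_Diff_singleton)
  moreover have "Q \<noteq> {}" using \<open>\<zero> \<in> Q\<close> by blast
  hence "card Q \<ge> 1" using finQ by (simp add: Suc_leI card_gt_0_iff)
  ultimately have Qbig: "card (carrier R) + 1 \<le> 2 * card Q" by linarith
  define B where "B = (\<lambda>z. t \<ominus> z) ` Q"
  have injB: "inj_on (\<lambda>z. t \<ominus> z) Q"
  proof (rule inj_onI)
    fix x y assume "x \<in> Q" "y \<in> Q" "t \<ominus> x = t \<ominus> y"
    hence "x \<in> carrier R" "y \<in> carrier R" "t \<ominus> x = t \<ominus> y" using QC by auto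
    have "x = t \<ominus> (t \<ominus> x)" using \<open>x \<in> carrier R\<close> t by algebra
    also have "\<dots> = t \<ominus> (t \<ominus> y)" using \<open>t \<ominus> x = t \<ominus> y\<close> by simp
    also have "\<dots> = y" using \<open>y \<in> carrier R\<close> t by algebra
    finally show "x = y" .
  qed
  have cB: "card B = card Q" unfolding B_def using card_image[OF injB] .
  have BC: "B \<subseteq> carrier R" unfolding B_def using QC t by auto
  have "Q \<inter> B \<noteq> {}"
  proof
    assume dis: "Q \<inter> B = {}"
    have "card (Q \<union> B) = card Q + card B" using dis finQ BC fin finite_subset by (intro card_Un_disjoint) auto
    moreover have "card (Q \<union> B) \<le> card (carrier R)" using QC BC fin by (intro card_mono) auto
    ultimately show False using Qbig cB by linarith
  qed
  then obtain z where "z \<in> Q" "z \<in> B" by auto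
  then obtain a b where ab: "a \<in> carrier R" "b \<in> carrier R" "a \<otimes> a = t \<ominus> b \<otimes> b"
    unfolding Q_def B_def by auto
  have "t = (t \<ominus> b \<otimes> b) \<oplus> b \<otimes> b" using t ab by algebra
  hence "t = a \<otimes> a \<oplus> b \<otimes> b" using ab(3) by simp
  thus ?thesis using ab by blast
qed

lemma finsum_pairs: "f \<in> {..<2*(n::nat)} \<rightarrow> carrier R \<Longrightarrow>
    finsum R f {..<2*n} = finsum R (\<lambda>i. f (2*i) \<oplus> f (2*i+1)) {..<n}"
proof (induction n)
  case 0 thus ?case by simp
next
  case (Suc n)
  have c: "f (2*n) \<in> carrier R" "f (2*n+1) \<in> carrier R" using Suc.prems by auto
  have fc: "f \<in> {..<2*n} \<rightarrow> carrier R" using Suc.prems by auto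
  have S: "{..<2 * Suc n} = insert (2*n+1) (insert (2*n) {..<2*n})" by auto
  have "finsum R f {..<2 * Suc n} = f (2*n+1) \<oplus> (f (2*n) \<oplus> finsum R f {..<2*n})"
    unfolding S using c fc by (simp add: finsum_insert finsum_closed Pi_def)
  also have "\<dots> = (f (2*n) \<oplus> f (2*n+1)) \<oplus> finsum R f {..<2*n}"
    using c finsum_closed[OF fc] by algebra
  also have "\<dots> = (f (2*n) \<oplus> f (2*n+1)) \<oplus> finsum R (\<lambda>i. f (2*i) \<oplus> f (2*i+1)) {..<n}"
    by (simp only: Suc.IH[OF fc])
  also have "\<dots> = finsum R (\<lambda>i. f (2*i) \<oplus> f (2*i+1)) (insert n {..<n})"
    by (rule finsum_insert[symmetric]) (use c fc in \<open>auto simp: Pi_def\<close>)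
  also have "\<dots> = finsum R (\<lambda>i. f (2*i) \<oplus> f (2*i+1)) {..<Suc n}"
    by (simp only: lessThan_Suc)
  finally show ?case .
qed

lemma lin2_inj:
  assumes c: "a \<in> carrier R" "b \<in> carrier R" "u \<in> carrier R" "v \<in> carrier R" "u' \<in> carrier R" "v' \<in> carrier R"
    and t: "a \<otimes> a \<oplus> b \<otimes> b \<noteq> \<zero>"
    and e1: "a \<otimes> u \<ominus> b \<otimes> v = a \<otimes> u' \<ominus> b \<otimes> v'" and e2: "b \<otimes> u \<oplus> a \<otimes> v = b \<otimes> u' \<oplus> a \<otimes> v'"
  shows "u = u' \<and> v = v'"
proof -
  have tc: "a \<otimes> a \<oplus> b \<otimes> b \<in> carrier R" using c by simp
  have "(a \<otimes> a \<oplus> b \<otimes> b) \<otimes> u = a \<otimes> (a \<otimes> u \<ominus> b \<otimes> v) \<oplus> b \<otimes> (b \<otimes> u \<oplus> a \<otimes> v)" using c by algebra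
  also have "\<dots> = a \<otimes> (a \<otimes> u' \<ominus> b \<otimes> v') \<oplus> b \<otimes> (b \<otimes> u' \<oplus> a \<otimes> v')" using e1 e2 by simp
  also have "\<dots> = (a \<otimes> a \<oplus> b \<otimes> b) \<otimes> u'" using c by algebra
  finally have 1: "u = u'" using m_lcancel[OF t tc] c by simp
  have "(a \<otimes> a \<oplus> b \<otimes> b) \<otimes> v = \<ominus> b \<otimes> (a \<otimes> u \<ominus> b \<otimes> v) \<oplus> a \<otimes> (b \<otimes> u \<oplus> a \<otimes> v)" using c by algebra
  also have "\<dots> = \<ominus> b \<otimes> (a \<otimes> u' \<ominus> b \<otimes> v') \<oplus> a \<otimes> (b \<otimes> u' \<oplus> a \<otimes> v')" using e1 e2 by simp
  also have "\<dots> = (a \<otimes> a \<oplus> b \<otimes> b) \<otimes> v'" using c by algebra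
  finally have 2: "v = v'" using m_lcancel[OF t tc] c by simp
  show ?thesis using 1 2 by simp
qed

end

context fsetting begin

definition rot :: "nat \<Rightarrow> 'a \<Rightarrow> 'a \<Rightarrow> (nat \<Rightarrow> 'a) \<Rightarrow> (nat \<Rightarrow> 'a)" where
  "rot d a b x = (\<lambda>i\<in>{..<d}. if even i then a \<otimes> x i \<ominus> b \<otimes> x (Suc i) else b \<otimes> x (i - 1) \<oplus> a \<otimes> x i)"

lemma rot_vecs: assumes "even d" "a \<in> carrier R" "b \<in> carrier R" "x \<in> vecs R d"
  shows "rot d a b x \<in> vecs R d"
  unfolding rot_def
proof (rule vecs_restrict)
  fix i assume i: "i < d"
  show "(if even i then a \<otimes> x i \<ominus> b \<otimes> x (Suc i) else b \<otimes> x (i - 1) \<oplus> a \<otimes> x i) \<in> carrier R"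
  proof (cases "even i")
    case True
    hence "Suc i < d" using i assms(1) by (metis Suc_lessI even_Suc)
    thus ?thesis using True assms i by (simp add: vecs_mem)
  next
    case False thus ?thesis using assms i by (simp add: vecs_mem)
  qed
qed

lemma rot_at: assumes "i < n" "d = 2 * n"
  shows "rot d a b x (2*i) = a \<otimes> x (2*i) \<ominus> b \<otimes> x (2*i+1)"
    and "rot d a b x (2*i+1) = b \<otimes> x (2*i) \<oplus> a \<otimes> x (2*i+1)"
  using assms unfolding rot_def by auto

lemma dotp_pairs: assumes d: "d = 2 * n" and y: "y \<in> vecs R d"
  shows "dotp R d y y = finsum R (\<lambda>i. y (2*i) \<otimes> y (2*i) \<oplus> y (2*i+1) \<otimes> y (2*i+1)) {..<n}"
  unfolding dotp_def d using finsum_pairs[of "\<lambda>k. y k \<otimes> y k" n] y d by (auto simp: vecs_mem)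

lemma rot_dotp: assumes d: "d = 2 * n" and ab: "a \<in> carrier R" "b \<in> carrier R" and x: "x \<in> vecs R d"
  shows "dotp R d (rot d a b x) (rot d a b x) = (a \<otimes> a \<oplus> b \<otimes> b) \<otimes> dotp R d x x"
proof -
  have ev: "even d" using d by simp
  have xc: "x k \<in> carrier R" if "k < d" for k using x that by (simp add: vecs_mem)
  have "dotp R d (rot d a b x) (rot d a b x) = finsum R (\<lambda>i. rot d a b x (2*i) \<otimes> rot d a b x (2*i) \<oplus> rot d a b x (2*i+1) \<otimes> rot d a b x (2*i+1)) {..<n}"
    by (rule dotp_pairs[OF d rot_vecs[OF ev ab x]])
  also have "\<dots> = finsum R (\<lambda>i. (a \<otimes> a \<oplus> b \<otimes> b) \<otimes> (x (2*i) \<otimes> x (2*i) \<oplus> x (2*i+1) \<otimes> x (2*i+1))) {..<n}"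
  proof (rule finsum_cong')
    show "{..<n} = {..<n}" by simp
    fix i assume "i \<in> {..<n}"
    hence i: "i < n" by simp
    have c: "x (2*i) \<in> carrier R" "x (2*i+1) \<in> carrier R" using xc i d by auto
    have "(a \<otimes> x (2*i) \<ominus> b \<otimes> x (2*i+1)) \<otimes> (a \<otimes> x (2*i) \<ominus> b \<otimes> x (2*i+1)) \<oplus>
          (b \<otimes> x (2*i) \<oplus> a \<otimes> x (2*i+1)) \<otimes> (b \<otimes> x (2*i) \<oplus> a \<otimes> x (2*i+1)) =
          (a \<otimes> a \<oplus> b \<otimes> b) \<otimes> (x (2*i) \<otimes> x (2*i) \<oplus> x (2*i+1) \<otimes> x (2*i+1))"
      using c ab by algebra
    thus "rot d a b x (2*i) \<otimes> rot d a b x (2*i) \<oplus> rot d a b x (2*i+1) \<otimes> rot d a b x (2*i+1) =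
          (a \<otimes> a \<oplus> b \<otimes> b) \<otimes> (x (2*i) \<otimes> x (2*i) \<oplus> x (2*i+1) \<otimes> x (2*i+1))"
      using rot_at[OF i d] by simp
  next
    show "(\<lambda>i. (a \<otimes> a \<oplus> b \<otimes> b) \<otimes> (x (2*i) \<otimes> x (2*i) \<oplus> x (2*i+1) \<otimes> x (2*i+1))) \<in> {..<n} \<rightarrow> carrier R"
      using xc d ab by (auto simp: Pi_def)
  qed
  also have "\<dots> = (a \<otimes> a \<oplus> b \<otimes> b) \<otimes> finsum R (\<lambda>i. x (2*i) \<otimes> x (2*i) \<oplus> x (2*i+1) \<otimes> x (2*i+1)) {..<n}"
    by (rule finsum_rdistr[symmetric]) (use xc d ab in \<open>auto simp: Pi_def\<close>)
  also have "\<dots> = (a \<otimes> a \<oplus> b \<otimes> b) \<otimes> dotp R d x x" using dotp_pairs[OF d x] by simp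
  finally show ?thesis .
qed

lemma rot_inj: assumes d: "d = 2 * n" and ab: "a \<in> carrier R" "b \<in> carrier R" and t: "a \<otimes> a \<oplus> b \<otimes> b \<noteq> \<zero>"
  shows "inj_on (rot d a b) (vecs R d)"
proof (rule inj_onI)
  fix x y assume x: "x \<in> vecs R d" and y: "y \<in> vecs R d" and e: "rot d a b x = rot d a b y"
  have pair: "x (2*i) = y (2*i) \<and> x (2*i+1) = y (2*i+1)" if i: "i < n" for i
  proof (rule lin2_inj[OF ab])
    show "x (2*i) \<in> carrier R" "x (2*i+1) \<in> carrier R" "y (2*i) \<in> carrier R" "y (2*i+1) \<in> carrier R"
      using x y i d by (auto simp: vecs_mem)
    show "a \<otimes> a \<oplus> b \<otimes> b \<noteq> \<zero>" by (rule t)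
    show "a \<otimes> x (2*i) \<ominus> b \<otimes> x (2*i+1) = a \<otimes> y (2*i) \<ominus> b \<otimes> y (2*i+1)"
      using e rot_at(1)[OF i d, of a b] by metis
    show "b \<otimes> x (2*i) \<oplus> a \<otimes> x (2*i+1) = b \<otimes> y (2*i) \<oplus> a \<otimes> y (2*i+1)"
      using e rot_at(2)[OF i d, of a b] by metis
  qed
  show "x = y"
  proof (rule vecs_eqI[OF x y])
    fix k assume k: "k < d"
    have kd: "k div 2 < n" using k d by simp
    have "k = 2 * (k div 2) \<or> k = 2 * (k div 2) + 1" by presburger
    thus "x k = y k" using pair[OF kd] by metis
  qed
qed

lemma sphere_le: assumes ev: "even d" and k: "k \<in> carrier R" "k \<noteq> \<zero>" and j: "j \<in> carrier R" "j \<noteq> \<zero>"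
  shows "card (sphere_set R d k) \<le> card (sphere_set R d j)"
proof -
  obtain n where d: "d = 2 * n" using ev by blast
  have ik: "inv k \<in> carrier R" "inv k \<otimes> k = \<one>" "inv k \<noteq> \<zero>" using inv_facts[OF k] by auto
  define t where "t = j \<otimes> inv k"
  have tc: "t \<in> carrier R" unfolding t_def using j ik by simp
  have t0: "t \<noteq> \<zero>" unfolding t_def using integral[of j "inv k"] j ik by blast
  have tk: "t \<otimes> k = j" unfolding t_def using j k ik by (simp add: m_assoc)
  obtain a b where ab: "a \<in> carrier R" "b \<in> carrier R" "t = a \<otimes> a \<oplus> b \<otimes> b" using two_squares[OF tc] by blast
  show ?thesis
  proof (rule card_inj_on_le)
    show "inj_on (rot d a b) (sphere_set R d k)"
      using rot_inj[OF d ab(1,2)] t0 ab(3) unfolding sphere_set_def by (auto intro: inj_on_subset)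
    show "rot d a b ` sphere_set R d k \<subseteq> sphere_set R d j"
    proof
      fix y assume "y \<in> rot d a b ` sphere_set R d k"
      then obtain x where x: "x \<in> vecs R d" "dotp R d x x = k" "y = rot d a b x" unfolding sphere_set_def by auto
      show "y \<in> sphere_set R d j" unfolding sphere_set_def
        using x rot_vecs[OF ev ab(1,2) x(1)] rot_dotp[OF d ab(1,2) x(1)] ab(3) tk by simp
    qed
    show "finite (sphere_set R d j)" using vecs_fin unfolding sphere_set_def by simp
  qed
qed

lemma alg1: "y \<in> carrier R \<Longrightarrow> r \<in> carrier R \<Longrightarrow> \<one> \<oplus> \<one> = ((y \<oplus> \<one>) \<otimes> (y \<oplus> \<one>) \<oplus> r) \<oplus> ((y \<ominus> \<one>) \<otimes> (y \<ominus> \<one>) \<oplus> r)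
            \<ominus> (y \<otimes> y \<oplus> r) \<ominus> (y \<otimes> y \<oplus> r)" by algebra
lemma alg2: "\<zero> \<oplus> \<zero> \<ominus> \<zero> \<ominus> \<zero> = \<zero>" by algebra
lemma S0_bound: assumes ch: "char_gt_two R" and d0: "0 < d"
  shows "card (sphere_set R d \<zero>) \<le> 2 * card (vecs R d - sphere_set R d \<zero>)"
proof -
  let ?V = "vecs R d" and ?S = "sphere_set R d \<zero>"
  define f1 where "f1 x = x(0 := x 0 \<oplus> \<one>)" for x :: "nat \<Rightarrow> 'a"
  define f2 where "f2 x = x(0 := x 0 \<ominus> \<one>)" for x :: "nat \<Rightarrow> 'a"
  define A where "A = {x\<in>?S. f1 x \<notin> ?S}"
  define B where "B = {x\<in>?S. f2 x \<notin> ?S}"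
  have two: "\<one> \<oplus> \<one> \<noteq> \<zero>" using ch unfolding char_gt_two_def by simp
  have SV: "?S \<subseteq> ?V" unfolding sphere_set_def by auto
  have finV: "finite ?V" by (rule vecs_fin)
  have f1V: "f1 x \<in> ?V" if "x \<in> ?V" for x unfolding f1_def using that d0 by (intro vecs_upd) (auto simp: vecs_mem)
  have f2V: "f2 x \<in> ?V" if "x \<in> ?V" for x unfolding f2_def using that d0 by (intro vecs_upd) (auto simp: vecs_mem)
  have cover: "?S \<subseteq> A \<union> B"
  proof
    fix x assume xS: "x \<in> ?S"
    have x: "x \<in> ?V" "dotp R d x x = \<zero>" using xS unfolding sphere_set_def by auto
    show "x \<in> A \<union> B"
    proof (rule ccontr)
      assume "x \<notin> A \<union> B"
      hence h1: "dotp R d (f1 x) (f1 x) = \<zero>" and h2: "dotp R d (f2 x) (f2 x) = \<zero>"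
        using xS unfolding A_def B_def sphere_set_def by auto
      define r where "r = drest d 0 x x"
      have rc: "r \<in> carrier R" unfolding r_def using drest_closed[OF x(1) x(1)] .
      have x0: "x 0 \<in> carrier R" using x d0 by (simp add: vecs_mem)
      have e0: "x 0 \<otimes> x 0 \<oplus> r = \<zero>" using dotp_split[OF x(1) x(1) d0] x(2) unfolding r_def by metis
      have "dotp R d (f1 x) (f1 x) = (x 0 \<oplus> \<one>) \<otimes> (x 0 \<oplus> \<one>) \<oplus> r"
        unfolding f1_def r_def using x0 by (intro dotp_upd[OF x(1) x(1) d0]) auto
      hence e1: "(x 0 \<oplus> \<one>) \<otimes> (x 0 \<oplus> \<one>) \<oplus> r = \<zero>" using h1 by metis
      have "dotp R d (f2 x) (f2 x) = (x 0 \<ominus> \<one>) \<otimes> (x 0 \<ominus> \<one>) \<oplus> r"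
        unfolding f2_def r_def using x0 by (intro dotp_upd[OF x(1) x(1) d0]) auto
      hence e2: "(x 0 \<ominus> \<one>) \<otimes> (x 0 \<ominus> \<one>) \<oplus> r = \<zero>" using h2 by metis
      have "\<one> \<oplus> \<one> = ((x 0 \<oplus> \<one>) \<otimes> (x 0 \<oplus> \<one>) \<oplus> r) \<oplus> ((x 0 \<ominus> \<one>) \<otimes> (x 0 \<ominus> \<one>) \<oplus> r)
            \<ominus> (x 0 \<otimes> x 0 \<oplus> r) \<ominus> (x 0 \<otimes> x 0 \<oplus> r)" using alg1[OF x0 rc] .
      also have "\<dots> = \<zero>" unfolding e0 e1 e2 by (rule alg2)
      finally show False using two by simp
    qed
  qed
  have injf1: "inj_on f1 ?V"
  proof (rule inj_onI)
    fix x y assume x: "x \<in> ?V" and y: "y \<in> ?V" and e: "f1 x = f1 y"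
    have x0: "x 0 \<in> carrier R" and y0: "y 0 \<in> carrier R" using x y d0 by (auto simp: vecs_mem)
    have "x 0 \<oplus> \<one> = f1 x 0" unfolding f1_def by simp
    also have "\<dots> = f1 y 0" by (simp only: e)
    also have "\<dots> = y 0 \<oplus> \<one>" unfolding f1_def by simp
    finally have e0: "x 0 \<oplus> \<one> = y 0 \<oplus> \<one>" .
    have "x 0 = (x 0 \<oplus> \<one>) \<ominus> \<one>" using x0 by algebra
    also have "\<dots> = (y 0 \<oplus> \<one>) \<ominus> \<one>" by (simp only: e0)
    also have "\<dots> = y 0" using y0 by algebra
    finally have "x 0 = y 0" .
    moreover have "x k = y k" if "k \<noteq> 0" for k
    proof -
      have "x k = f1 x k" unfolding f1_def using that by simp
      also have "\<dots> = f1 y k" by (simp only: e)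
      also have "\<dots> = y k" unfolding f1_def using that by simp
      finally show ?thesis .
    qed
    ultimately show "x = y" by (metis vecs_eqI[OF x y])
  qed
  have injf2: "inj_on f2 ?V"
  proof (rule inj_onI)
    fix x y assume x: "x \<in> ?V" and y: "y \<in> ?V" and e: "f2 x = f2 y"
    have x0: "x 0 \<in> carrier R" and y0: "y 0 \<in> carrier R" using x y d0 by (auto simp: vecs_mem)
    have "x 0 \<ominus> \<one> = f2 x 0" unfolding f2_def by simp
    also have "\<dots> = f2 y 0" by (simp only: e)
    also have "\<dots> = y 0 \<ominus> \<one>" unfolding f2_def by simp
    finally have e0: "x 0 \<ominus> \<one> = y 0 \<ominus> \<one>" .
    have "x 0 = (x 0 \<ominus> \<one>) \<oplus> \<one>" using x0 by algebra
    also have "\<dots> = (y 0 \<ominus> \<one>) \<oplus> \<one>" by (simp only: e0)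
    also have "\<dots> = y 0" using y0 by algebra
    finally have "x 0 = y 0" .
    moreover have "x k = y k" if "k \<noteq> 0" for k
    proof -
      have "x k = f2 x k" unfolding f2_def using that by simp
      also have "\<dots> = f2 y k" by (simp only: e)
      also have "\<dots> = y k" unfolding f2_def using that by simp
      finally show ?thesis .
    qed
    ultimately show "x = y" by (metis vecs_eqI[OF x y])
  qed
  have AV: "A \<subseteq> ?V" and BV: "B \<subseteq> ?V" unfolding A_def B_def using SV by auto
  have cA: "card A \<le> card (?V - ?S)"
  proof (rule card_inj_on_le)
    show "inj_on f1 A" by (rule inj_on_subset[OF injf1 AV])
    show "f1 ` A \<subseteq> ?V - ?S" using f1V AV unfolding A_def by auto
    show "finite (?V - ?S)" using finV by simp
  qed
  have cB: "card B \<le> card (?V - ?S)"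
  proof (rule card_inj_on_le)
    show "inj_on f2 B" by (rule inj_on_subset[OF injf2 BV])
    show "f2 ` B \<subseteq> ?V - ?S" using f2V BV unfolding B_def by auto
    show "finite (?V - ?S)" using finV by simp
  qed
  have finAB: "finite A" "finite B" using finite_subset[OF AV finV] finite_subset[OF BV finV] .
  have "card ?S \<le> card (A \<union> B)" using cover finAB by (intro card_mono) auto
  also have "\<dots> \<le> card A + card B" by (rule card_Un_le)
  finally show ?thesis using cA cB by simp
qed


lemma sphere_lb: assumes ch: "char_gt_two R" and ev: "even d" and d2: "2 \<le> d"
  and j: "j \<in> carrier R" "j \<noteq> \<zero>"
  shows "card (vecs R d) \<le> 3 * ((card (carrier R) - 1) * card (sphere_set R d j))"
proof -
  let ?V = "vecs R d" and ?S0 = "sphere_set R d \<zero>" and ?K = "carrier R - {\<zero>}"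
  have finV: "finite ?V" by (rule vecs_fin)
  have SV: "?S0 \<subseteq> ?V" unfolding sphere_set_def by auto
  have "?V - ?S0 \<subseteq> (\<Union>k\<in>?K. sphere_set R d k)"
  proof
    fix x assume x: "x \<in> ?V - ?S0"
    have xV: "x \<in> ?V" and xn: "dotp R d x x \<noteq> \<zero>" using x unfolding sphere_set_def by auto
    have "dotp R d x x \<in> ?K" using dotp_closed[OF xV xV] xn by blast
    moreover have "x \<in> sphere_set R d (dotp R d x x)" using xV unfolding sphere_set_def by blast
    ultimately show "x \<in> (\<Union>k\<in>?K. sphere_set R d k)" by blast
  qed
  moreover have "finite (\<Union>k\<in>?K. sphere_set R d k)"
    by (rule finite_subset[OF _ finV]) (auto simp: sphere_set_def)
  ultimately have "card (?V - ?S0) \<le> card (\<Union>k\<in>?K. sphere_set R d k)"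
    by (intro card_mono)
  also have "\<dots> \<le> (\<Sum>k\<in>?K. card (sphere_set R d k))" using fin by (intro card_UN_le) simp
  also have "\<dots> \<le> (\<Sum>k\<in>?K. card (sphere_set R d j))" by (rule sum_mono, rule sphere_le[OF ev _ _ j]) blast+
  also have "\<dots> = (card (carrier R) - 1) * card (sphere_set R d j)" using fin by (simp add: card_Diff_singleton)
  finally have 1: "card (?V - ?S0) \<le> (card (carrier R) - 1) * card (sphere_set R d j)" .
  have 2: "card ?S0 \<le> 2 * card (?V - ?S0)" using S0_bound[OF ch] d2 by simp
  have fS0: "finite ?S0" using SV finV finite_subset by blast
  have "card (?V - ?S0) = card ?V - card ?S0" using card_Diff_subset[OF fS0 SV] .
  moreover have "card ?S0 \<le> card ?V" using card_mono[OF finV SV] .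
  ultimately have "card ?V = card ?S0 + card (?V - ?S0)" by simp
  thus ?thesis using 1 2 by linarith
qed


lemma main_ineq: assumes ch: "char_gt_two R" and ev: "even d" and d2: "2 \<le> d"
  and j: "j \<in> carrier R" "j \<noteq> \<zero>" and hg: "homogeneous_deg0 R d g"
  shows "(1 / real (card (sphere_set R d j))) * (\<Sum>x\<in>sphere_set R d j. (cmod (fourier R chi d g x))\<^sup>2)
      \<le> 6 * (\<Sum>m\<in>vecs R d. (cmod (g m))\<^sup>2)"
proof -
  let ?S = "sphere_set R d j" and ?V = "vecs R d"
  define q where "q = real (card (carrier R)) - 1"
  define A where "A = (\<Sum>x\<in>?S. (cmod (fourier R chi d g x))\<^sup>2)"
  define G where "G = (\<Sum>m\<in>?V. (cmod (g m))\<^sup>2)"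
  define s where "s = real (card ?S)"
  have G0: "G \<ge> 0" unfolding G_def by (intro sum_nonneg) simp
  have q2: "card (carrier R) \<ge> 2"
  proof -
    have "{\<zero>, \<one>} \<subseteq> carrier R" by simp
    hence "card {\<zero>, \<one>} \<le> card (carrier R)" using fin by (intro card_mono) auto
    thus ?thesis using zero_not_one by simp
  qed
  have qpos: "q > 0" unfolding q_def using q2 by simp
  have qe: "real (card (carrier R) - 1) = q" unfolding q_def using q2 by (simp add: of_nat_diff)
  have dc: "q * A \<le> 2 * (real (card ?V) * G)"
    using double_count[OF j hg] planch[of d g] unfolding A_def G_def qe by simp
  have "real (card ?V) \<le> real (3 * ((card (carrier R) - 1) * card ?S))"
    using sphere_lb[OF ch ev d2 j] by (simp only: of_nat_le_iff)
  also have "\<dots> = 3 * (q * s)" unfolding s_def using qe by simp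
  finally have lb: "real (card ?V) \<le> 3 * (q * s)" .
  have Vpos: "real (card ?V) > 0" using card_vecs q2 by simp
  have "q * s > 0" using lb Vpos by linarith
  hence spos: "s > 0" using qpos by (simp add: zero_less_mult_iff)
  have "real (card ?V) * G \<le> 3 * (q * s) * G" using mult_right_mono[OF lb G0] .
  hence "q * A \<le> 2 * (3 * (q * s) * G)" using dc by linarith
  hence "q * A \<le> q * (6 * s * G)" by (simp add: algebra_simps)
  hence "A \<le> 6 * s * G" using qpos by simp
  hence "A / s \<le> 6 * G" using spos by (simp add: divide_le_eq mult.commute mult.left_commute)
  thus ?thesis unfolding A_def G_def s_def by simp
qed

end

lemma lp_bound:
  fixes f :: "'x \<Rightarrow> real"
  assumes finA: "finite A" and nn: "\<And>m. m \<in> A \<Longrightarrow> f m \<ge> 0" and p: "0 < p" "p \<le> 2" and pe: "p * e = 1"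
  shows "sqrt (\<Sum>m\<in>A. (f m)\<^sup>2) \<le> (\<Sum>m\<in>A. f m powr p) powr e"
proof -
  define T where "T = (\<Sum>m\<in>A. f m powr p)"
  define N where "N = T powr e"
  have T0: "T \<ge> 0" unfolding T_def by (intro sum_nonneg) simp
  have N0: "N \<ge> 0" unfolding N_def by simp
  show ?thesis
  proof (cases "T = 0")
    case True
    have "\<forall>m\<in>A. f m powr p = 0" using True finA unfolding T_def by (subst (asm) sum_nonneg_eq_0_iff) auto
    hence "\<forall>m\<in>A. f m = 0" by simp
    hence "(\<Sum>m\<in>A. (f m)\<^sup>2) = 0" by simp
    thus ?thesis using N0 unfolding N_def T_def by simp
  next
    case False
    hence Tpos: "T > 0" using T0 by simp
    have "e = 1 / p" using pe p by (simp add: field_simps)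
    hence epos: "e > 0" using p by simp
    have NpT: "N powr p = T" unfolding N_def using Tpos by (simp add: powr_powr mult.commute[of e p] pe)
    have fle: "f m \<le> N" if m: "m \<in> A" for m
    proof -
      have "f m powr p \<le> T" unfolding T_def using finA m by (intro member_le_sum) auto
      hence "(f m powr p) powr e \<le> T powr e" using epos by (intro powr_mono2) auto
      moreover have "(f m powr p) powr e = f m" using nn[OF m] by (simp add: powr_powr pe)
      ultimately show ?thesis unfolding N_def by simp
    qed
    have "(\<Sum>m\<in>A. (f m)\<^sup>2) \<le> (\<Sum>m\<in>A. f m powr p * N powr (2 - p))"
    proof (intro sum_mono)
      fix m assume m: "m \<in> A"
      have "(f m)\<^sup>2 = f m powr 2" using nn[OF m] by (simp add: powr_numeral)
      also have "\<dots> = f m powr p * f m powr (2 - p)" by (simp add: powr_add[symmetric])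
      also have "\<dots> \<le> f m powr p * N powr (2 - p)"
        using fle[OF m] nn[OF m] p by (intro mult_left_mono powr_mono2) auto
      finally show "(f m)\<^sup>2 \<le> f m powr p * N powr (2 - p)" .
    qed
    also have "\<dots> = T * N powr (2 - p)" unfolding T_def by (simp add: sum_distrib_right)
    also have "\<dots> = N powr p * N powr (2 - p)" using NpT by simp
    also have "\<dots> = N\<^sup>2" using N0 by (simp add: powr_add[symmetric] powr_numeral)
    finally have "(\<Sum>m\<in>A. (f m)\<^sup>2) \<le> N\<^sup>2" .
    hence "sqrt (\<Sum>m\<in>A. (f m)\<^sup>2) \<le> sqrt (N\<^sup>2)" by (rule real_sqrt_le_mono)
    thus ?thesis using N0 unfolding N_def T_def by simp
  qed
qed

theorem theorem2p2:
  fixes d :: nat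
  assumes "even d" and "d \<ge> 2"
  shows "\<exists>C>0. \<forall>(R :: nat ring) (chi :: nat \<Rightarrow> complex) j (g :: (nat \<Rightarrow> nat) \<Rightarrow> complex).
           field R \<longrightarrow> finite (carrier R) \<longrightarrow> char_gt_two R \<longrightarrow>
           nontrivial_add_char R chi \<longrightarrow>
           j \<in> carrier R - {\<zero>\<^bsub>R\<^esub>} \<longrightarrow> homogeneous_deg0 R d g \<longrightarrow>
           sqrt ((1 / real (card (sphere_set R d j))) *
                 (\<Sum>x\<in>sphere_set R d j. (cmod (fourier R chi d g x))\<^sup>2))
           \<le> C * (\<Sum>m\<in>vecs R d. cmod (g m) powr ((2 * real d + 4) / (real d + 4)))
                   powr ((real d + 4) / (2 * real d + 4))"
proof (intro exI[of _ 3] conjI allI impI)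
  show "(0::real) < 3" by simp
  fix R :: "nat ring" and chi :: "nat \<Rightarrow> complex" and j and g :: "(nat \<Rightarrow> nat) \<Rightarrow> complex"
  assume F: "field R" and fin: "finite (carrier R)" and ch: "char_gt_two R" and nc: "nontrivial_add_char R chi"
    and j: "j \<in> carrier R - {\<zero>\<^bsub>R\<^esub>}" and hg: "homogeneous_deg0 R d g"
  interpret fsetting R chi using F fin nc by (simp add: fsetting_def fsetting_axioms_def)
  let ?G = "\<Sum>m\<in>vecs R d. (cmod (g m))\<^sup>2"
  have mi: "(1 / real (card (sphere_set R d j))) * (\<Sum>x\<in>sphere_set R d j. (cmod (fourier R chi d g x))\<^sup>2) \<le> 6 * ?G"
    using main_ineq[OF ch assms(1,2) _ _ hg] j by blast
  have G0: "?G \<ge> 0" by (intro sum_nonneg) simp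
  have "sqrt ((1 / real (card (sphere_set R d j))) * (\<Sum>x\<in>sphere_set R d j. (cmod (fourier R chi d g x))\<^sup>2))
      \<le> sqrt (6 * ?G)" by (rule real_sqrt_le_mono[OF mi])
  also have "\<dots> = sqrt 6 * sqrt ?G" by (simp add: real_sqrt_mult)
  also have "\<dots> \<le> 3 * sqrt ?G"
  proof (rule mult_right_mono)
    show "sqrt 6 \<le> (3::real)" by (rule real_le_lsqrt) auto
  qed (simp add: G0)
  also have "\<dots> \<le> 3 * (\<Sum>m\<in>vecs R d. cmod (g m) powr ((2 * real d + 4) / (real d + 4))) powr ((real d + 4) / (2 * real d + 4))"
  proof (rule mult_left_mono)
    show "sqrt ?G \<le> (\<Sum>m\<in>vecs R d. cmod (g m) powr ((2 * real d + 4) / (real d + 4))) powr ((real d + 4) / (2 * real d + 4))"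
    proof (rule lp_bound)
      show "finite (vecs R d)" by (rule vecs_fin)
      show "0 < (2 * real d + 4) / (real d + 4)" by simp
      show "(2 * real d + 4) / (real d + 4) \<le> 2" by (simp add: divide_le_eq)
      have a: "2 * real d + 4 > 0" "real d + 4 > 0" by simp_all
      have "(2 * real d + 4) / (real d + 4) * ((real d + 4) / (2 * real d + 4))
          = ((2 * real d + 4) * (real d + 4)) / ((2 * real d + 4) * (real d + 4))"
        by (simp only: times_divide_times_eq mult.commute)
      also have "\<dots> = 1" using a by simp
      finally show "(2 * real d + 4) / (real d + 4) * ((real d + 4) / (2 * real d + 4)) = 1" .
    qed simp
  qed simp
  finally show "sqrt ((1 / real (card (sphere_set R d j))) * (\<Sum>x\<in>sphere_set R d j. (cmod (fourier R chi d g x))\<^sup>2))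
      \<le> 3 * (\<Sum>m\<in>vecs R d. cmod (g m) powr ((2 * real d + 4) / (real d + 4))) powr ((real d + 4) / (2 * real d + 4))" .
qed

end
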